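(* Assume (A7) and (A8) of the context. Then for every $\delta\in\mathbb{R}^D$ with $\|\delta\|\le\|\theta^*\|$, with probability $1-\delta_{n_q}$, $$\Lambda_{\min}\big[\nabla^2_{\theta_S}\ell(\theta^*+\delta)\big]\ge\frac{D_{\min,2}}{C_{\mathrm{ratio}}^2},$$ where $\nabla^2_{\theta_S}\ell$ is the submatrix of the Hessian of $\ell$ with rows and columns indexed by the blocks in $S$.
   Context: Let $E=\{(u,v):1\le v\le u\le m\}$, $D=b|E|$, $\psi:\mathbb{R}^2\to\mathbb{R}^b$, and $f:\mathbb{R}^m\to\mathbb{R}^D$ the concatenation of the blocks $f_t(x)=\psi(x_u,x_v)$, $t=(u,v)\in E$; $f_S$ is the subvector of blocks in $S$. $P,Q$ distributions on $\mathbb{R}^m$ with densities $p,q$; samples $x_p^{(1..n_p)}$ i.i.d. $P$, $x_q^{(1..n_q)}$ i.i.d. $Q$. $r(x;\theta)=\exp(\theta^\top f(x))/N(\theta)$, $N(\theta)=\mathbb{E}_Q[\exp(\theta^\top f(x))]$; $\hat N(\theta)=\frac1{n_q}\sum_i\exp(\theta^\top f(x_q^{(i)}))$; $\hat r(x;\theta)=\exp(\theta^\top f(x))/\hat N(\theta)$; $\ell(\theta)=-\frac1{n_p}\sum_i\theta^\top f(x_p^{(i)})+\log\hat N(\theta)$. $\theta^*$ is the true parameter ($p=q\,r(\cdot;\theta^* )$), $S=\{t:\theta^*_t\ne0\}$. $\|\cdot\|$: Euclidean/spectral norm; $\Lambda_{\min}$ smallest eigenvalue. (A7) For all $\delta$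 with $\|\delta\|\le\|\theta^*\|$ and all $x$: $0<C_{\min}\le r(x;\theta^*+\delta)\le C_{\max}<\infty$; moreover $\frac1{C_{\mathrm{ratio}}}\le\hat r(x;\theta^*+\delta)\le C_{\mathrm{ratio}}$ and $\|f_t(x)\|\le C_{f_t,\max}$ for constants. (A8) With probability 1: $\max_{t\in E}\frac1{n_q}\sum_i\|f_t(x_q^{(i)})\|\le D_{\max,1}<\infty$, $\|\frac1{n_q}\sum_if(x_q^{(i)})f(x_q^{(i)})^\top\|\le D_{\max,2}$ and $\|\widehat{\mathrm{Cov}}_q[f]\|\le D_{\max,2}<\infty$; with probability $1-\delta_{n_q}$, $\Lambda_{\min}(\widehat{\mathrm{Cov}}_q[f_S])\ge D_{\min,2}>0$; $\widehat{\mathrm{Cov}}_q$ is the sample covariance over the $Q$-sample. *)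

theory Defs
  imports "HOL-Probability.Probability"
begin

text \<open>Points of R^m are functions nat => real, coordinates 1..m.
  Parameter vectors in R^D are functions on the index set
  Idx m b = E m \<times> {..<b}; index ((u,v),k) is the k-th component of block (u,v).\<close>

definition E :: "nat \<Rightarrow> (nat \<times> nat) set" where
  "E m = {(u,v). 1 \<le> v \<and> v \<le> u \<and> u \<le> m}"

definition Idx :: "nat \<Rightarrow> nat \<Rightarrow> ((nat \<times> nat) \<times> nat) set" where
  "Idx m b = E m \<times> {..<b}"

definition IdxS :: "(nat \<times> nat) set \<Rightarrow> nat \<Rightarrow> ((nat \<times> nat) \<times> nat) set" where
  "IdxS S b = S \<times> {..<b}"

definition feat :: "(real \<Rightarrow> real \<Rightarrow> nat \<Rightarrow> real) \<Rightarrow> (nat \<Rightarrow> real) \<Rightarrow> (nat \<times> nat) \<times> nat \<Rightarrow> real" where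
  "feat \<psi> x i = (case i of ((u,v),k) \<Rightarrow> \<psi> (x u) (x v) k)"

definition ip :: "'i set \<Rightarrow> ('i \<Rightarrow> real) \<Rightarrow> ('i \<Rightarrow> real) \<Rightarrow> real" where
  "ip J a c = (\<Sum>i\<in>J. a i * c i)"

definition vnorm :: "'i set \<Rightarrow> ('i \<Rightarrow> real) \<Rightarrow> real" where
  "vnorm J a = sqrt (\<Sum>i\<in>J. (a i)\<^sup>2)"

definition block_norm :: "nat \<Rightarrow> ((nat \<times> nat) \<times> nat \<Rightarrow> real) \<Rightarrow> nat \<times> nat \<Rightarrow> real" where
  "block_norm b a t = sqrt (\<Sum>k<b. (a (t,k))\<^sup>2)"

definition mat_vec :: "'i set \<Rightarrow> ('i \<Rightarrow> 'i \<Rightarrow> real) \<Rightarrow> ('i \<Rightarrow> real) \<Rightarrow> 'i \<Rightarrow> real" where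
  "mat_vec J H a = (\<lambda>i. \<Sum>j\<in>J. H i j * a j)"

definition mat_norm :: "'i set \<Rightarrow> ('i \<Rightarrow> 'i \<Rightarrow> real) \<Rightarrow> real" where
  "mat_norm J H = Sup {vnorm J (mat_vec J H a) | a. vnorm J a \<le> 1}"

definition eigenvalues :: "'i set \<Rightarrow> ('i \<Rightarrow> 'i \<Rightarrow> real) \<Rightarrow> real set" where
  "eigenvalues J H = {e. \<exists>a. (\<exists>j\<in>J. a j \<noteq> 0) \<and> (\<forall>i\<in>J. mat_vec J H a i = e * a i)}"

definition lambda_min :: "'i set \<Rightarrow> ('i \<Rightarrow> 'i \<Rightarrow> real) \<Rightarrow> real" where
  "lambda_min J H = Min (eigenvalues J H)"

definition smean :: "nat \<Rightarrow> (nat \<Rightarrow> 'i \<Rightarrow> real) \<Rightarrow> 'i \<Rightarrow> real" where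
  "smean n g = (\<lambda>i. (\<Sum>l<n. g l i) / real n)"

definition ssecond :: "nat \<Rightarrow> (nat \<Rightarrow> 'i \<Rightarrow> real) \<Rightarrow> 'i \<Rightarrow> 'i \<Rightarrow> real" where
  "ssecond n g = (\<lambda>i j. (\<Sum>l<n. g l i * g l j) / real n)"

definition scov :: "nat \<Rightarrow> (nat \<Rightarrow> 'i \<Rightarrow> real) \<Rightarrow> 'i \<Rightarrow> 'i \<Rightarrow> real" where
  "scov n g = (\<lambda>i j. (\<Sum>l<n. (g l i - smean n g i) * (g l j - smean n g j)) / real n)"

definition Nfun :: "nat \<Rightarrow> nat \<Rightarrow> (real \<Rightarrow> real \<Rightarrow> nat \<Rightarrow> real) \<Rightarrow> (nat \<Rightarrow> real) measure
     \<Rightarrow> ((nat \<times> nat) \<times> nat \<Rightarrow> real) \<Rightarrow> real" where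
  "Nfun m b \<psi> Q \<theta> = (\<integral>x. exp (ip (Idx m b) \<theta> (feat \<psi> x)) \<partial>Q)"

definition rfun :: "nat \<Rightarrow> nat \<Rightarrow> (real \<Rightarrow> real \<Rightarrow> nat \<Rightarrow> real) \<Rightarrow> (nat \<Rightarrow> real) measure
     \<Rightarrow> (nat \<Rightarrow> real) \<Rightarrow> ((nat \<times> nat) \<times> nat \<Rightarrow> real) \<Rightarrow> real" where
  "rfun m b \<psi> Q x \<theta> = exp (ip (Idx m b) \<theta> (feat \<psi> x)) / Nfun m b \<psi> Q \<theta>"

definition Nhat :: "nat \<Rightarrow> nat \<Rightarrow> (real \<Rightarrow> real \<Rightarrow> nat \<Rightarrow> real) \<Rightarrow> nat \<Rightarrow> (nat \<Rightarrow> nat \<Rightarrow> real)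
     \<Rightarrow> ((nat \<times> nat) \<times> nat \<Rightarrow> real) \<Rightarrow> real" where
  "Nhat m b \<psi> nq xq \<theta> = (\<Sum>l<nq. exp (ip (Idx m b) \<theta> (feat \<psi> (xq l)))) / real nq"

definition rhat :: "nat \<Rightarrow> nat \<Rightarrow> (real \<Rightarrow> real \<Rightarrow> nat \<Rightarrow> real) \<Rightarrow> nat \<Rightarrow> (nat \<Rightarrow> nat \<Rightarrow> real)
     \<Rightarrow> (nat \<Rightarrow> real) \<Rightarrow> ((nat \<times> nat) \<times> nat \<Rightarrow> real) \<Rightarrow> real" where
  "rhat m b \<psi> nq xq x \<theta> = exp (ip (Idx m b) \<theta> (feat \<psi> x)) / Nhat m b \<psi> nq xq \<theta>"

definition loss :: "nat \<Rightarrow> nat \<Rightarrow> (real \<Rightarrow> real \<Rightarrow> nat \<Rightarrow> real) \<Rightarrow> nat \<Rightarrow> (nat \<Rightarrow> nat \<Rightarrow> real)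
     \<Rightarrow> nat \<Rightarrow> (nat \<Rightarrow> nat \<Rightarrow> real) \<Rightarrow> ((nat \<times> nat) \<times> nat \<Rightarrow> real) \<Rightarrow> real" where
  "loss m b \<psi> np xp nq xq \<theta> =
     - (\<Sum>l<np. ip (Idx m b) \<theta> (feat \<psi> (xp l))) / real np + ln (Nhat m b \<psi> nq xq \<theta>)"

definition pderiv_at :: "'i \<Rightarrow> (('i \<Rightarrow> real) \<Rightarrow> real) \<Rightarrow> ('i \<Rightarrow> real) \<Rightarrow> real" where
  "pderiv_at i g \<theta> = deriv (\<lambda>s. g (\<theta>(i := s))) (\<theta> i)"

definition hessian :: "(('i \<Rightarrow> real) \<Rightarrow> real) \<Rightarrow> ('i \<Rightarrow> real) \<Rightarrow> 'i \<Rightarrow> 'i \<Rightarrow> real" where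
  "hessian g \<theta> = (\<lambda>i j. pderiv_at i (pderiv_at j g) \<theta>)"

definition supp_blocks :: "nat \<Rightarrow> nat \<Rightarrow> ((nat \<times> nat) \<times> nat \<Rightarrow> real) \<Rightarrow> (nat \<times> nat) set" where
  "supp_blocks m b \<theta> = {t \<in> E m. \<exists>k<b. \<theta> (t,k) \<noteq> 0}"

definition Rm :: "nat \<Rightarrow> (nat \<Rightarrow> real) measure" where
  "Rm m = PiM {1..m} (\<lambda>_. borel)"

definition Lm :: "nat \<Rightarrow> (nat \<Rightarrow> real) measure" where
  "Lm m = PiM {1..m} (\<lambda>_. lborel)"

end

theory Submission
  imports Defs
begin


definition qf :: "'i set \<Rightarrow> ('i \<Rightarrow> 'i \<Rightarrow> real) \<Rightarrow> ('i \<Rightarrow> real) \<Rightarrow> real" where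
  "qf K H a = (\<Sum>i\<in>K. \<Sum>j\<in>K. a i * H i j * a j)"
definition nsq :: "'i set \<Rightarrow> ('i \<Rightarrow> real) \<Rightarrow> real" where
  "nsq K a = (\<Sum>i\<in>K. (a i)\<^sup>2)"
definition symm :: "'i set \<Rightarrow> ('i \<Rightarrow> 'i \<Rightarrow> real) \<Rightarrow> bool" where
  "symm K H = (\<forall>i\<in>K. \<forall>j\<in>K. H i j = H j i)"

lemma eig_qf:
  assumes "\<forall>i\<in>K. mat_vec K H a i = e * a i"
  shows "qf K H a = e * nsq K a"
proof -
  have "qf K H a = (\<Sum>i\<in>K. a i * mat_vec K H a i)"
    unfolding qf_def mat_vec_def by (simp add: sum_distrib_left mult.assoc)
  also have "\<dots> = (\<Sum>i\<in>K. e * (a i)\<^sup>2)"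
    using assms by (intro sum.cong) (auto simp: power2_eq_square)
  finally show ?thesis by (simp add: nsq_def sum_distrib_left)
qed

lemma eig_orth:
  assumes "symm K H" "\<forall>i\<in>K. mat_vec K H a i = e * a i" "\<forall>i\<in>K. mat_vec K H c i = e' * c i"
  shows "e * ip K a c = e' * ip K a c"
proof -
  have "e * ip K a c = (\<Sum>i\<in>K. mat_vec K H a i * c i)"
    using assms(2) by (simp add: ip_def sum_distrib_left mult.assoc)
  also have "\<dots> = (\<Sum>i\<in>K. \<Sum>j\<in>K. H i j * a j * c i)"
    by (simp add: mat_vec_def sum_distrib_right)
  also have "\<dots> = (\<Sum>j\<in>K. \<Sum>i\<in>K. H i j * a j * c i)"
    by (rule sum.swap)
  also have "\<dots> = (\<Sum>j\<in>K. a j * mat_vec K H c j)"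
    unfolding mat_vec_def sum_distrib_left
    using assms(1) unfolding symm_def
    by (intro sum.cong refl) (auto simp: mult_ac)
  also have "\<dots> = e' * ip K a c"
    using assms(3) by (simp add: ip_def sum_distrib_left mult_ac)
  finally show ?thesis .
qed

lemma bessel:
  fixes v :: "'p \<Rightarrow> 'i \<Rightarrow> real"
  assumes P: "finite P" and K: "finite K"
    and on: "\<forall>p\<in>P. nsq K (v p) = 1"
    and og: "\<forall>p\<in>P. \<forall>q\<in>P. p \<noteq> q \<longrightarrow> ip K (v p) (v q) = 0"
  shows "(\<Sum>p\<in>P. (ip K (v p) x)\<^sup>2) \<le> nsq K x"
proof -
  define c where "c p = ip K (v p) x" for p
  define y where "y i = (\<Sum>p\<in>P. c p * v p i)" for i
  have ipvv: "ip K (v p) (v q) = (if p = q then 1 else 0)" if "p\<in>P" "q\<in>P" for p q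
    using on og that by (auto simp: ip_def nsq_def power2_eq_square)
  have xy: "(\<Sum>i\<in>K. x i * y i) = (\<Sum>p\<in>P. (c p)\<^sup>2)"
  proof -
    have "(\<Sum>i\<in>K. x i * y i) = (\<Sum>i\<in>K. \<Sum>p\<in>P. c p * (v p i * x i))"
      by (simp add: y_def sum_distrib_left mult_ac)
    also have "\<dots> = (\<Sum>p\<in>P. c p * (\<Sum>i\<in>K. v p i * x i))"
      by (subst sum.swap) (simp add: sum_distrib_left)
    finally show ?thesis by (simp add: c_def ip_def power2_eq_square)
  qed
  have yv: "(\<Sum>i\<in>K. y i * v q i) = c q" if "q \<in> P" for q
  proof -
    have "(\<Sum>i\<in>K. y i * v q i) = (\<Sum>p\<in>P. c p * ip K (v p) (v q))"
      unfolding y_def ip_def sum_distrib_right sum_distrib_left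
      by (subst sum.swap) (simp add: mult_ac)
    also have "\<dots> = (\<Sum>p\<in>P. if p = q then c q else 0)"
      using that by (intro sum.cong) (auto simp: ipvv)
    finally show ?thesis using that P by simp
  qed
  have yy: "(\<Sum>i\<in>K. (y i)\<^sup>2) = (\<Sum>p\<in>P. (c p)\<^sup>2)"
  proof -
    have "(\<Sum>i\<in>K. (y i)\<^sup>2) = (\<Sum>i\<in>K. \<Sum>q\<in>P. c q * (y i * v q i))"
      by (simp add: power2_eq_square y_def[of i for i] sum_distrib_left mult_ac)
    also have "\<dots> = (\<Sum>q\<in>P. c q * (\<Sum>i\<in>K. y i * v q i))"
      by (subst sum.swap) (simp add: sum_distrib_left)
    also have "\<dots> = (\<Sum>q\<in>P. (c q)\<^sup>2)"
      by (intro sum.cong) (auto simp: yv power2_eq_square)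
    finally show ?thesis .
  qed
  have "0 \<le> (\<Sum>i\<in>K. (x i - y i)\<^sup>2)" by (simp add: sum_nonneg)
  also have "\<dots> = nsq K x - 2 * (\<Sum>i\<in>K. x i * y i) + (\<Sum>i\<in>K. (y i)\<^sup>2)"
    by (simp add: nsq_def power2_diff sum.distrib sum_subtractf sum_distrib_left mult_ac)
  finally show ?thesis using xy yy by (simp add: c_def)
qed

lemma card_orthonormal:
  fixes v :: "'p \<Rightarrow> 'i \<Rightarrow> real"
  assumes P: "finite P" and K: "finite K"
    and on: "\<forall>p\<in>P. nsq K (v p) = 1"
    and og: "\<forall>p\<in>P. \<forall>q\<in>P. p \<noteq> q \<longrightarrow> ip K (v p) (v q) = 0"
  shows "card P \<le> card K"
proof -
  define u where "u i = (\<lambda>j. if j = i then 1 else (0::real))" for i :: 'i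
  have ipu: "ip K (v p) (u i) = v p i" if "i \<in> K" for p i
  proof -
    have "ip K (v p) (u i) = (\<Sum>j\<in>K. if j = i then v p j else 0)"
      unfolding ip_def by (intro sum.cong) (auto simp: u_def)
    then show ?thesis using that K by simp
  qed
  have nu: "nsq K (u i) = 1" if "i \<in> K" for i
  proof -
    have "nsq K (u i) = (\<Sum>j\<in>K. if j = i then 1 else 0)"
      unfolding nsq_def by (intro sum.cong) (auto simp: u_def)
    then show ?thesis using that K by simp
  qed
  have "real (card P) = (\<Sum>p\<in>P. nsq K (v p))" using on by simp
  also have "\<dots> = (\<Sum>i\<in>K. \<Sum>p\<in>P. (ip K (v p) (u i))\<^sup>2)"
    unfolding nsq_def
  proof -
    have "(\<Sum>p\<in>P. \<Sum>i\<in>K. (v p i)\<^sup>2) = (\<Sum>i\<in>K. \<Sum>p\<in>P. (v p i)\<^sup>2)" by (rule sum.swap)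
    also have "\<dots> = (\<Sum>i\<in>K. \<Sum>p\<in>P. (ip K (v p) (u i))\<^sup>2)"
      by (intro sum.cong refl) (simp add: ipu)
    finally show "(\<Sum>p\<in>P. \<Sum>i\<in>K. (v p i)\<^sup>2) = (\<Sum>i\<in>K. \<Sum>p\<in>P. (ip K (v p) (u i))\<^sup>2)" .
  qed
  also have "\<dots> \<le> (\<Sum>i\<in>K. nsq K (u i))"
    by (intro sum_mono bessel[OF P K on og])
  also have "\<dots> = real (card K)" by (simp add: nu)
  finally show ?thesis by simp
qed

lemma nsq_pos:
  assumes "finite K" "j \<in> K" "a j \<noteq> 0"
  shows "nsq K a > 0"
  unfolding nsq_def using assms
  by (intro sum_pos2[where i=j]) auto

lemma eig_finite:
  assumes K: "finite K" and sy: "symm K H"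
  shows "finite (eigenvalues K H)"
proof -
  have "card G \<le> card K" if G: "G \<subseteq> eigenvalues K H" "finite G" for G
  proof -
    define a where "a e = (SOME a. (\<exists>j\<in>K. a j \<noteq> 0) \<and> (\<forall>i\<in>K. mat_vec K H a i = e * a i))" for e
    have a: "(\<exists>j\<in>K. a e j \<noteq> 0) \<and> (\<forall>i\<in>K. mat_vec K H (a e) i = e * a e i)" if "e \<in> G" for e
    proof -
      have "\<exists>a. (\<exists>j\<in>K. a j \<noteq> 0) \<and> (\<forall>i\<in>K. mat_vec K H a i = e * a i)"
        using G(1) that unfolding eigenvalues_def by blast
      then show ?thesis unfolding a_def by (rule someI_ex)
    qed
    define v where "v e = (\<lambda>i. a e i / sqrt (nsq K (a e)))" for e
    have pos: "nsq K (a e) > 0" if eG: "e \<in> G" for e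
    proof -
      obtain j where "j \<in> K" "a e j \<noteq> 0" using a[OF eG] by blast
      then show ?thesis using K nsq_pos by metis
    qed
    have nv: "nsq K (v e) = 1" if "e \<in> G" for e
    proof -
      have "nsq K (v e) = (\<Sum>i\<in>K. (a e i)\<^sup>2 / nsq K (a e))"
        unfolding v_def using pos[OF that]
        by (simp add: nsq_def power_divide del: sum_nonneg)
      also have "\<dots> = 1" using pos[OF that]
        by (simp add: sum_divide_distrib[symmetric] nsq_def)
      finally show ?thesis .
    qed
    have ev: "\<forall>i\<in>K. mat_vec K H (v e) i = e * v e i" if "e \<in> G" for e
    proof
      fix i assume i: "i \<in> K"
      have "mat_vec K H (v e) i = mat_vec K H (a e) i / sqrt (nsq K (a e))"
        unfolding mat_vec_def v_def by (simp add: sum_divide_distrib)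
      then show "mat_vec K H (v e) i = e * v e i"
        using a[OF that] i by (simp add: v_def)
    qed
    have og: "ip K (v e) (v e') = 0" if "e \<in> G" "e' \<in> G" "e \<noteq> e'" for e e'
      using eig_orth[OF sy ev[OF that(1)] ev[OF that(2)]] that(3) by simp
    show ?thesis by (rule card_orthonormal[OF G(2) K, of v]) (use nv og in auto)
  qed
  then show ?thesis using finite_if_finite_subsets_card_bdd[of "eigenvalues K H" "card K"] by simp
qed


definition bf :: "'i set \<Rightarrow> ('i \<Rightarrow> 'i \<Rightarrow> real) \<Rightarrow> ('i \<Rightarrow> real) \<Rightarrow> ('i \<Rightarrow> real) \<Rightarrow> real" where
  "bf K H a c = (\<Sum>i\<in>K. \<Sum>j\<in>K. a i * H i j * c j)"

lemma bf_sym: assumes "symm K H" shows "bf K H a c = bf K H c a"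
proof -
  have "bf K H a c = (\<Sum>j\<in>K. \<Sum>i\<in>K. a i * H i j * c j)" unfolding bf_def by (rule sum.swap)
  also have "\<dots> = bf K H c a" unfolding bf_def using assms unfolding symm_def
    by (intro sum.cong refl) (auto simp: mult_ac)
  finally show ?thesis .
qed

lemma qf_add:
  assumes "symm K H"
  shows "qf K H (\<lambda>i. v i + t * w i) = qf K H v + 2 * t * bf K H v w + t\<^sup>2 * qf K H w"
proof -
  have "qf K H (\<lambda>i. v i + t * w i) = qf K H v + t * bf K H v w + t * bf K H w v + t\<^sup>2 * qf K H w"
    unfolding qf_def bf_def
    by (simp add: algebra_simps sum.distrib sum_distrib_left power2_eq_square)
  then show ?thesis using bf_sym[OF assms, of w v] by simp
qed

lemma nsq_add:
  "nsq K (\<lambda>i. v i + t * w i) = nsq K v + 2 * t * ip K v w + t\<^sup>2 * nsq K w"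
  unfolding nsq_def ip_def
  by (simp add: algebra_simps sum.distrib sum_distrib_left power2_eq_square)

lemma qf_cong: "(\<And>i. i \<in> K \<Longrightarrow> a i = c i) \<Longrightarrow> qf K H a = qf K H c"
  unfolding qf_def by (intro sum.cong refl) auto

lemma nsq_cong: "(\<And>i. i \<in> K \<Longrightarrow> a i = c i) \<Longrightarrow> nsq K a = nsq K c"
  unfolding nsq_def by (intro sum.cong refl) auto

lemma qf_scale: "qf K H (\<lambda>i. r * a i) = r\<^sup>2 * qf K H a"
  unfolding qf_def by (simp add: sum_distrib_left power2_eq_square mult_ac)

lemma nsq_scale: "nsq K (\<lambda>i. r * a i) = r\<^sup>2 * nsq K a"
  unfolding nsq_def by (simp add: sum_distrib_left power_mult_distrib)

lemma quad_zero:
  fixes b c :: real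
  assumes "\<forall>t. 0 \<le> t * b + t\<^sup>2 * c"
  shows "b = 0"
proof (rule ccontr)
  assume b: "b \<noteq> 0"
  define d where "d = \<bar>c\<bar> + 1"
  have d: "d > 0" "c - d < 0" unfolding d_def by auto
  define t where "t = - b / d"
  have "t * b + t\<^sup>2 * c = b\<^sup>2 * (c - d) / d\<^sup>2"
    unfolding t_def using d by (simp add: field_simps power2_eq_square)
  also have "\<dots> < 0"
    using b d by (intro divide_neg_pos mult_pos_neg) auto
  finally show False using assms[rule_format, of t] by linarith
qed

lemma rayleigh:
  assumes K: "finite K" "K \<noteq> {}" and sy: "symm K H"
  shows "\<exists>\<mu>\<in>eigenvalues K H. \<forall>a. qf K H a \<ge> \<mu> * nsq K a"
proof -
  define X where "X = product_topology (\<lambda>_. euclideanreal) K"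
  define Sph where "Sph = {a \<in> topspace X. nsq K a \<in> {1}}"
  have cnsq: "continuous_map X euclideanreal (nsq K)"
    unfolding nsq_def X_def
    by (intro continuous_map_sum K continuous_map_real_pow)
       (auto intro: continuous_map_product_projection[of _ K "\<lambda>_. euclideanreal", simplified])
  have cqf: "continuous_map X euclideanreal (qf K H)"
    unfolding qf_def X_def
    by (intro continuous_map_sum K continuous_map_real_mult continuous_map_canonical_const)
       (auto intro: continuous_map_product_projection[of _ K "\<lambda>_. euclideanreal", simplified])
  have cl: "closedin X Sph" unfolding Sph_def
    by (rule closedin_continuous_map_preimage[OF cnsq]) simp
  have sub: "Sph \<subseteq> PiE K (\<lambda>_. {-1..1})"
  proof
    fix a assume a: "a \<in> Sph"
    then have aP: "a \<in> PiE K (\<lambda>_. UNIV)" and n1: "nsq K a = 1" by (auto simp: Sph_def X_def)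
    have "\<bar>a i\<bar> \<le> 1" if "i \<in> K" for i
    proof -
      have "(a i)\<^sup>2 \<le> nsq K a" unfolding nsq_def
        using that K by (intro member_le_sum) auto
      then have "\<bar>a i\<bar>\<^sup>2 \<le> 1\<^sup>2" using n1 by simp
      then show ?thesis using abs_le_square_iff by (metis abs_one power2_abs)
    qed
    then show "a \<in> PiE K (\<lambda>_. {-1..1})" using aP by (auto simp: PiE_def Pi_def abs_le_iff)
  qed
  have cb: "compactin X (PiE K (\<lambda>_. {-1..1}))"
    unfolding X_def by (simp add: compactin_PiE)
  have cs: "compactin X Sph" by (rule closed_compactin[OF cb sub cl])
  have cimg: "compact (qf K H ` Sph)"
    using image_compactin[OF cs cqf] by simp
  obtain k where k: "k \<in> K" using K by blast
  define e where "e i = (if i \<in> K then (if i = k then 1 else 0::real) else undefined)" for i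
  have "e \<in> Sph"
  proof -
    have "nsq K e = (\<Sum>i\<in>K. if i = k then 1 else 0)" unfolding nsq_def e_def
      by (intro sum.cong refl) auto
    then show ?thesis using K k by (auto simp: Sph_def X_def e_def PiE_def extensional_def)
  qed
  then obtain v where vS: "v \<in> Sph" and vmin: "\<forall>a\<in>Sph. qf K H v \<le> qf K H a"
    using compact_attains_inf[OF cimg] by blast
  define \<mu> where "\<mu> = qf K H v"
  have n1: "nsq K v = 1" using vS by (simp add: Sph_def)
  have bound: "qf K H a \<ge> \<mu> * nsq K a" for a
  proof (cases "nsq K a = 0")
    case True
    then have "\<forall>i\<in>K. (a i)\<^sup>2 = 0" unfolding nsq_def using K by (subst (asm) sum_nonneg_eq_0_iff) auto
    then have "qf K H a = qf K H (\<lambda>_. 0)" by (intro qf_cong) auto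
    then show ?thesis using True by (simp add: qf_def)
  next
    case False
    define r where "r = nsq K a"
    have r: "r > 0" using False unfolding r_def nsq_def by (simp add: order_le_neq_trans[OF sum_nonneg] )
    define a' where "a' = restrict (\<lambda>i. (1 / sqrt r) * a i) K"
    have "nsq K a' = (1 / sqrt r)\<^sup>2 * r" unfolding a'_def r_def
      by (subst nsq_scale[symmetric]) (rule nsq_cong, simp)
    then have "nsq K a' = 1" using r by (simp add: power_divide)
    then have "a' \<in> Sph" by (simp add: Sph_def X_def a'_def)
    then have "\<mu> \<le> qf K H a'" using vmin \<mu>_def by simp
    also have "qf K H a' = (1 / sqrt r)\<^sup>2 * qf K H a" unfolding a'_def
      by (subst qf_scale[symmetric]) (rule qf_cong, simp)
    also have "\<dots> = qf K H a / r" using r by (simp add: power_divide)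
    finally show ?thesis using r by (simp add: r_def field_simps)
  qed
  have eig: "mat_vec K H v j = \<mu> * v j" if j: "j \<in> K" for j
  proof -
    define w where "w i = (if i = j then 1 else (0::real))" for i
    have "\<forall>t. 0 \<le> t * (2 * (bf K H v w - \<mu> * ip K v w)) + t\<^sup>2 * (qf K H w - \<mu> * nsq K w)"
    proof
      fix t
      have "\<mu> * nsq K (\<lambda>i. v i + t * w i) \<le> qf K H (\<lambda>i. v i + t * w i)" by (rule bound)
      then show "0 \<le> t * (2 * (bf K H v w - \<mu> * ip K v w)) + t\<^sup>2 * (qf K H w - \<mu> * nsq K w)"
        unfolding qf_add[OF sy] nsq_add using n1 \<mu>_def by (simp add: algebra_simps)
    qed
    then have z: "bf K H v w = \<mu> * ip K v w" using quad_zero by fastforce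
    have "bf K H v w = (\<Sum>i\<in>K. if i = j then mat_vec K H v j else 0)"
      unfolding bf_def mat_vec_def w_def
      apply (subst sum.swap)
      using sy j unfolding symm_def by (intro sum.cong refl) (auto simp: mult_ac if_distrib cong: if_cong)
    also have "\<dots> = mat_vec K H v j" using K j by simp
    finally have 1: "bf K H v w = mat_vec K H v j" .
    have "ip K v w = (\<Sum>i\<in>K. if i = j then v j else 0)"
      unfolding ip_def w_def by (intro sum.cong refl) auto
    also have "\<dots> = v j" using K j by simp
    finally show ?thesis using z 1 by simp
  qed
  have "\<exists>j\<in>K. v j \<noteq> 0"
  proof (rule ccontr)
    assume "\<not> ?thesis"
    then have "nsq K v = 0" by (simp add: nsq_def)
    then show False using n1 by simp
  qed
  then have "\<mu> \<in> eigenvalues K H" using eig by (auto simp: eigenvalues_def)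
  then show ?thesis using bound by blast
qed


lemma lmin_props:
  assumes K: "finite K" "K \<noteq> {}" and sy: "symm K H"
  shows "lambda_min K H \<in> eigenvalues K H \<and> (\<forall>a. qf K H a \<ge> lambda_min K H * nsq K a)"
proof -
  obtain \<mu> where mu: "\<mu> \<in> eigenvalues K H" "\<forall>a. qf K H a \<ge> \<mu> * nsq K a"
    using rayleigh[OF K sy] by blast
  have fin: "finite (eigenvalues K H)" by (rule eig_finite[OF K(1) sy])
  have ne: "eigenvalues K H \<noteq> {}" using mu by blast
  have inn: "lambda_min K H \<in> eigenvalues K H"
    unfolding lambda_min_def using fin ne by (rule Min_in)
  have le: "lambda_min K H \<le> \<mu>" unfolding lambda_min_def using fin mu(1) by (rule Min_le)
  have "qf K H a \<ge> lambda_min K H * nsq K a" for a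
  proof -
    have "nsq K a \<ge> 0" unfolding nsq_def by (simp add: sum_nonneg)
    then have "lambda_min K H * nsq K a \<le> \<mu> * nsq K a" using le by (simp add: mult_right_mono)
    then show ?thesis using mu(2)[rule_format, of a] by linarith
  qed
  then show ?thesis using inn by blast
qed

lemma key_eig:
  assumes K: "finite K" "K \<noteq> {}" and syH: "symm K H" and syC: "symm K C"
    and cmp: "\<forall>a. qf K H a \<ge> c * qf K C a" and c: "c > 0"
    and D: "lambda_min K C \<ge> D"
  shows "lambda_min K H \<ge> c * D"
proof -
  from lmin_props[OF K syH] have "lambda_min K H \<in> eigenvalues K H" by blast
  then obtain a where a: "\<exists>j\<in>K. a j \<noteq> 0" "\<forall>i\<in>K. mat_vec K H a i = lambda_min K H * a i"
    unfolding eigenvalues_def by blast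
  have pos: "nsq K a > 0" using a(1) K(1) nsq_pos by metis
  have 1: "lambda_min K H * nsq K a = qf K H a" using eig_qf[OF a(2)] by simp
  have 2: "qf K H a \<ge> c * qf K C a" using cmp by blast
  have 3: "qf K C a \<ge> lambda_min K C * nsq K a" using lmin_props[OF K syC] by blast
  have 4: "lambda_min K C * nsq K a \<ge> D * nsq K a" using D pos by simp
  have "c * (D * nsq K a) \<le> c * qf K C a" using 3 4 c by simp
  then have "c * (D * nsq K a) \<le> lambda_min K H * nsq K a" using 1 2 by linarith
  then show ?thesis using pos by (simp add: mult.assoc[symmetric])
qed

lemma var_ineq:
  fixes w y :: "nat \<Rightarrow> real"
  assumes n: "n \<ge> 1" and w: "\<forall>l<n. w l \<ge> \<kappa>" and k: "\<kappa> \<ge> 0" and sw: "(\<Sum>l<n. w l) = 1"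
  shows "(\<Sum>l<n. w l * (y l)\<^sup>2) - (\<Sum>l<n. w l * y l)\<^sup>2 \<ge> \<kappa> * (\<Sum>l<n. (y l - (\<Sum>l<n. y l) / real n)\<^sup>2)"
proof -
  define \<mu> where "\<mu> = (\<Sum>l<n. w l * y l)"
  define yb where "yb = (\<Sum>l<n. y l) / real n"
  have "(\<Sum>l<n. w l * (y l - \<mu>)\<^sup>2) = (\<Sum>l<n. w l * (y l)\<^sup>2) - 2 * \<mu> * (\<Sum>l<n. w l * y l) + \<mu>\<^sup>2 * (\<Sum>l<n. w l)"
    by (simp add: power2_diff algebra_simps sum.distrib sum_subtractf sum_distrib_left sum_distrib_right)
  then have e1: "(\<Sum>l<n. w l * (y l)\<^sup>2) - \<mu>\<^sup>2 = (\<Sum>l<n. w l * (y l - \<mu>)\<^sup>2)"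
    using sw by (simp add: \<mu>_def power2_eq_square)
  have "(\<Sum>l<n. w l * (y l - \<mu>)\<^sup>2) \<ge> (\<Sum>l<n. \<kappa> * (y l - \<mu>)\<^sup>2)"
    using w by (intro sum_mono mult_right_mono) auto
  have sy: "(\<Sum>l<n. y l) = real n * yb" using n by (simp add: yb_def)
  have "(\<Sum>l<n. (y l - \<mu>)\<^sup>2) = (\<Sum>l<n. (y l - yb)\<^sup>2) + real n * (yb - \<mu>)\<^sup>2"
  proof -
    have "(\<Sum>l<n. (y l - \<mu>)\<^sup>2) = (\<Sum>l<n. (y l - yb)\<^sup>2 + 2 * (yb - \<mu>) * (y l - yb) + (yb - \<mu>)\<^sup>2)"
      by (intro sum.cong refl) (simp add: power2_eq_square algebra_simps)
    also have "\<dots> = (\<Sum>l<n. (y l - yb)\<^sup>2) + 2 * (yb - \<mu>) * ((\<Sum>l<n. y l) - real n * yb) + real n * (yb - \<mu>)\<^sup>2"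
      by (simp add: sum.distrib sum_distrib_left sum_subtractf algebra_simps)
    finally show ?thesis using sy by simp
  qed
  then have "(\<Sum>l<n. (y l - \<mu>)\<^sup>2) \<ge> (\<Sum>l<n. (y l - yb)\<^sup>2)" by simp
  then have "\<kappa> * (\<Sum>l<n. (y l - yb)\<^sup>2) \<le> (\<Sum>l<n. \<kappa> * (y l - \<mu>)\<^sup>2)"
    using k by (simp add: sum_distrib_left[symmetric] mult_left_mono)
  also have "\<dots> \<le> (\<Sum>l<n. w l * (y l - \<mu>)\<^sup>2)"
    using w by (intro sum_mono mult_right_mono) auto
  finally show ?thesis using e1 by (simp add: \<mu>_def yb_def)
qed


definition dJ :: "'i set \<Rightarrow> 'i \<Rightarrow> ('i \<Rightarrow> real) \<Rightarrow> real" where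
  "dJ J i c = (if i \<in> J then c i else 0)"

lemma ip_upd:
  assumes "finite J"
  shows "ip J (\<theta>(i:=s)) c = ip J \<theta> c + (s - \<theta> i) * dJ J i c"
proof (cases "i \<in> J")
  case True
  have "ip J (\<theta>(i:=s)) c = s * c i + (\<Sum>k\<in>J-{i}. \<theta> k * c k)"
    unfolding ip_def using assms True by (simp add: sum.remove)
  moreover have "ip J \<theta> c = \<theta> i * c i + (\<Sum>k\<in>J-{i}. \<theta> k * c k)"
    unfolding ip_def using assms True by (simp add: sum.remove)
  ultimately show ?thesis using True by (simp add: dJ_def algebra_simps)
next
  case False
  then show ?thesis unfolding ip_def dJ_def by (auto intro!: sum.cong)
qed

definition EE :: "'i set \<Rightarrow> nat \<Rightarrow> (nat \<Rightarrow> 'i \<Rightarrow> real) \<Rightarrow> ('i \<Rightarrow> real) \<Rightarrow> real" where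
  "EE J n F \<theta> = (\<Sum>l<n. exp (ip J \<theta> (F l)))"

lemma EE_pos: assumes "n \<ge> 1" shows "EE J n F \<theta> > 0"
proof -
  have "0 \<in> {..<n}" using assms by simp
  then have "{..<n} \<noteq> {}" by blast
  then show ?thesis unfolding EE_def by (intro sum_pos) auto
qed

definition Lg where
  "Lg J np Fp n F \<theta> = - (\<Sum>l<np. ip J \<theta> (Fp l)) / real np + ln (EE J n F \<theta> / real n)"

definition G1 where
  "G1 J np Fp n F j \<theta> = - (\<Sum>l<np. dJ J j (Fp l)) / real np
     + (\<Sum>l<n. dJ J j (F l) * exp (ip J \<theta> (F l))) / EE J n F \<theta>"

definition H2 where
  "H2 J n F i j \<theta> = (\<Sum>l<n. dJ J i (F l) * dJ J j (F l) * exp (ip J \<theta> (F l))) / EE J n F \<theta>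
     - (\<Sum>l<n. dJ J j (F l) * exp (ip J \<theta> (F l))) * (\<Sum>l<n. dJ J i (F l) * exp (ip J \<theta> (F l)))
       / (EE J n F \<theta>)\<^sup>2"

lemma grad:
  assumes J: "finite J" and n: "n \<ge> 1" and np: "np \<ge> 1"
  shows "pderiv_at j (Lg J np Fp n F) \<theta> = G1 J np Fp n F j \<theta>"
proof -
  define e where "e l = exp (ip J \<theta> (F l))" for l
  have f: "(\<lambda>s. Lg J np Fp n F (\<theta>(j:=s))) = (\<lambda>s. - (\<Sum>l<np. ip J \<theta> (Fp l) + (s - \<theta> j) * dJ J j (Fp l)) / real np
       + ln ((\<Sum>l<n. exp (ip J \<theta> (F l) + (s - \<theta> j) * dJ J j (F l))) / real n))"
    unfolding Lg_def EE_def by (simp add: ip_upd[OF J])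
  have E: "(\<Sum>l<n. exp (ip J \<theta> (F l) + (\<theta> j - \<theta> j) * dJ J j (F l))) = EE J n F \<theta>"
    by (simp add: EE_def)
  have "((\<lambda>s. - (\<Sum>l<np. ip J \<theta> (Fp l) + (s - \<theta> j) * dJ J j (Fp l)) / real np
       + ln ((\<Sum>l<n. exp (ip J \<theta> (F l) + (s - \<theta> j) * dJ J j (F l))) / real n)) has_real_derivative
       (- (\<Sum>l<np. dJ J j (Fp l)) / real np
       + ((\<Sum>l<n. exp (ip J \<theta> (F l) + (\<theta> j - \<theta> j) * dJ J j (F l)) * dJ J j (F l)) / real n)
         / ((\<Sum>l<n. exp (ip J \<theta> (F l) + (\<theta> j - \<theta> j) * dJ J j (F l))) / real n))) (at (\<theta> j))"
    using EE_pos[OF n, of J F \<theta>] n np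
    by (auto intro!: derivative_eq_intros simp: E sum_negf[symmetric] EE_def)
  then have "((\<lambda>s. Lg J np Fp n F (\<theta>(j:=s))) has_real_derivative G1 J np Fp n F j \<theta>) (at (\<theta> j))"
    unfolding f G1_def using n EE_pos[OF n, of J F \<theta>]
    by (simp add: E mult.commute EE_def)
  then show ?thesis unfolding pderiv_at_def by (rule DERIV_imp_deriv)
qed


lemma hess:
  assumes J: "finite J" and n: "n \<ge> 1"
  shows "pderiv_at i (G1 J np Fp n F j) \<theta> = H2 J n F i j \<theta>"
proof -
  define c where "c = - (\<Sum>l<np. dJ J j (Fp l)) / real np"
  define e where "e l = exp (ip J \<theta> (F l))" for l
  define E where "E = EE J n F \<theta>"
  have Epos: "E > 0" unfolding E_def by (rule EE_pos[OF n])
  have Ed: "(\<Sum>l<n. e l) = E" by (simp add: E_def EE_def e_def)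
  have f: "(\<lambda>s. G1 J np Fp n F j (\<theta>(i:=s))) = (\<lambda>s. c
       + (\<Sum>l<n. dJ J j (F l) * exp (ip J \<theta> (F l) + (s - \<theta> i) * dJ J i (F l)))
       / (\<Sum>l<n. exp (ip J \<theta> (F l) + (s - \<theta> i) * dJ J i (F l))))"
    unfolding G1_def EE_def c_def by (simp add: ip_upd[OF J])
  have "((\<lambda>s. c
       + (\<Sum>l<n. dJ J j (F l) * exp (ip J \<theta> (F l) + (s - \<theta> i) * dJ J i (F l)))
       / (\<Sum>l<n. exp (ip J \<theta> (F l) + (s - \<theta> i) * dJ J i (F l)))) has_real_derivative
       H2 J n F i j \<theta>) (at (\<theta> i))"
    unfolding H2_def E_def[symmetric] 
    using Epos Ed
    apply (auto intro!: derivative_eq_intros simp: e_def)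
    apply (simp add: mult_ac)
    apply (simp add: field_simps power2_eq_square)
    done
  then show ?thesis unfolding pderiv_at_def f by (rule DERIV_imp_deriv)
qed


lemma qf_outer: "qf K (\<lambda>i j. u i * v j) a = (\<Sum>i\<in>K. a i * u i) * (\<Sum>j\<in>K. a j * v j)"
  unfolding qf_def sum_product by (simp add: mult_ac)

lemma qf_diff: "qf K (\<lambda>i j. P i j - Q i j) a = qf K P a - qf K Q a"
  unfolding qf_def by (simp add: algebra_simps sum_subtractf)

lemma qf_sumL: "finite L \<Longrightarrow> qf K (\<lambda>i j. \<Sum>l\<in>L. M l i j) a = (\<Sum>l\<in>L. qf K (M l) a)"
  unfolding qf_def
  by (simp add: sum_distrib_left sum_distrib_right sum.swap[of _ L K] sum.swap[of _ L] algebra_simps)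

lemma qf_eqon: "(\<And>i j. i \<in> K \<Longrightarrow> j \<in> K \<Longrightarrow> P i j = Q i j) \<Longrightarrow> qf K P a = qf K Q a"
  unfolding qf_def by (intro sum.cong refl) auto

lemma qf_H2:
  fixes F :: "nat \<Rightarrow> 'i \<Rightarrow> real" and \<theta> a :: "'i \<Rightarrow> real"
  assumes J: "finite J" and KJ: "K \<subseteq> J" and n: "n \<ge> 1"
  defines "w \<equiv> \<lambda>l. exp (ip J \<theta> (F l)) / EE J n F \<theta>"
  defines "y \<equiv> \<lambda>l. \<Sum>i\<in>K. a i * F l i"
  shows "qf K (\<lambda>i j. H2 J n F i j \<theta>) a = (\<Sum>l<n. w l * (y l)\<^sup>2) - (\<Sum>l<n. w l * y l)\<^sup>2"
proof -
  have K: "finite K" using J KJ finite_subset by blast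
  define u where "u i = (\<Sum>l<n. w l * F l i)" for i
  have "qf K (\<lambda>i j. H2 J n F i j \<theta>) a
      = qf K (\<lambda>i j. (\<Sum>l<n. w l * (F l i * F l j)) - u i * u j) a"
  proof (rule qf_eqon)
    fix i j assume ij: "i \<in> K" "j \<in> K"
    then have "i \<in> J" "j \<in> J" using KJ by auto
    then show "H2 J n F i j \<theta> = (\<Sum>l<n. w l * (F l i * F l j)) - u i * u j"
      unfolding H2_def u_def w_def dJ_def
      by (simp add: sum_divide_distrib power2_eq_square mult_ac)
         (simp add: sum_divide_distrib[symmetric])
  qed
  also have "\<dots> = (\<Sum>l<n. w l * qf K (\<lambda>i j. F l i * F l j) a) - (\<Sum>i\<in>K. a i * u i)\<^sup>2"
    unfolding qf_diff qf_outer
    by (subst qf_sumL) (simp_all add: qf_def sum_distrib_left power2_eq_square mult_ac)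
  also have "(\<Sum>i\<in>K. a i * u i) = (\<Sum>l<n. w l * y l)"
    unfolding u_def y_def by (simp add: sum_distrib_left sum.swap[of _ K] mult_ac)
  also have "(\<Sum>l<n. w l * qf K (\<lambda>i j. F l i * F l j) a) = (\<Sum>l<n. w l * (y l)\<^sup>2)"
    unfolding qf_outer y_def by (simp add: power2_eq_square)
  finally show ?thesis .
qed

lemma qf_scov:
  fixes F :: "nat \<Rightarrow> 'i \<Rightarrow> real" and a :: "'i \<Rightarrow> real"
  assumes K: "finite K" and n: "n \<ge> 1"
  defines "y \<equiv> \<lambda>l. \<Sum>i\<in>K. a i * F l i"
  shows "qf K (scov n F) a = (\<Sum>l<n. (y l - (\<Sum>l<n. y l) / real n)\<^sup>2) / real n"
proof -
  define g where "g l i = F l i - smean n F i" for l i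
  have "qf K (scov n F) a = qf K (\<lambda>i j. \<Sum>l<n. (1 / real n) * (g l i * g l j)) a"
    by (rule qf_eqon) (simp add: scov_def g_def sum_divide_distrib)
  also have "\<dots> = (\<Sum>l<n. (1 / real n) * (\<Sum>i\<in>K. a i * g l i)\<^sup>2)"
    by (subst qf_sumL) (simp_all add: qf_def sum_distrib_left power2_eq_square mult_ac sum_product)
  also have "(\<lambda>l. (\<Sum>i\<in>K. a i * g l i)) = (\<lambda>l. y l - (\<Sum>l<n. y l) / real n)"
  proof
    fix l
    have "(\<Sum>i\<in>K. a i * smean n F i) = (\<Sum>l<n. y l) / real n"
      unfolding smean_def y_def
      by (simp add: sum_divide_distrib[symmetric] sum_distrib_left sum.swap[of _ K] mult_ac)
    then show "(\<Sum>i\<in>K. a i * g l i) = y l - (\<Sum>l<n. y l) / real n"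
      unfolding g_def y_def by (simp add: algebra_simps sum_subtractf)
  qed
  finally show ?thesis by (simp add: sum_divide_distrib)
qed


lemma eig_empty: "eigenvalues {} H = {}"
  unfolding eigenvalues_def by auto

lemma symm_H2: "symm K (\<lambda>i j. H2 J n F i j \<theta>)"
  unfolding symm_def H2_def by (simp add: mult_ac)

lemma symm_scov: "symm K (scov n F)"
  unfolding symm_def scov_def by (simp add: mult_ac)

lemma finite_E: "finite (E m)"
proof -
  have "E m \<subseteq> {0..m} \<times> {0..m}" unfolding E_def by auto
  then show ?thesis by (rule finite_subset) simp
qed

lemma main_det:
  fixes F :: "nat \<Rightarrow> 'i \<Rightarrow> real" and \<theta> :: "'i \<Rightarrow> real"
  assumes J: "finite J" and KJ: "K \<subseteq> J" and n: "n \<ge> 1"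
    and Cr: "Cr \<ge> 1" and D: "D > 0"
    and rh: "\<forall>l<n. exp (ip J \<theta> (F l)) / (EE J n F \<theta> / real n) \<ge> 1 / Cr"
    and lm: "lambda_min K (scov n F) \<ge> D"
  shows "lambda_min K (\<lambda>i j. H2 J n F i j \<theta>) \<ge> D / Cr\<^sup>2"
proof (cases "K = {}")
  case True
  have "D / Cr\<^sup>2 \<le> D" using Cr D by (simp add: divide_le_eq power2_eq_square) (smt (verit) mult_le_cancel_left1)
  then show ?thesis using lm True by (simp add: lambda_min_def eig_empty)
next
  case False
  have K: "finite K" using J KJ finite_subset by blast
  define w where "w l = exp (ip J \<theta> (F l)) / EE J n F \<theta>" for l
  have Epos: "EE J n F \<theta> > 0" by (rule EE_pos[OF n])
  have Cpos: "Cr > 0" using Cr by simp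
  have wk: "\<forall>l<n. w l \<ge> 1 / (Cr * real n)"
  proof (intro allI impI)
    fix l assume l: "l < n"
    have "exp (ip J \<theta> (F l)) / (EE J n F \<theta> / real n) = real n * w l"
      unfolding w_def by simp
    then have "1 / Cr \<le> real n * w l" using rh l by metis
    then show "w l \<ge> 1 / (Cr * real n)" using n Cpos
      by (simp add: field_simps)
  qed
  have sw: "(\<Sum>l<n. w l) = 1" unfolding w_def using Epos
    by (simp add: sum_divide_distrib[symmetric] EE_def)
  have cmp: "\<forall>a. qf K (\<lambda>i j. H2 J n F i j \<theta>) a \<ge> (1 / Cr) * qf K (scov n F) a"
  proof
    fix a
    define y where "y l = (\<Sum>i\<in>K. a i * F l i)" for l
    have "qf K (\<lambda>i j. H2 J n F i j \<theta>) a = (\<Sum>l<n. w l * (y l)\<^sup>2) - (\<Sum>l<n. w l * y l)\<^sup>2"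
      unfolding w_def y_def by (rule qf_H2[OF J KJ n])
    also have "\<dots> \<ge> 1 / (Cr * real n) * (\<Sum>l<n. (y l - (\<Sum>l<n. y l) / real n)\<^sup>2)"
      by (rule var_ineq[OF n wk _ sw]) (use Cpos in simp)
    finally show "qf K (\<lambda>i j. H2 J n F i j \<theta>) a \<ge> (1 / Cr) * qf K (scov n F) a"
      unfolding qf_scov[OF K n] y_def by simp
  qed
  have "lambda_min K (\<lambda>i j. H2 J n F i j \<theta>) \<ge> (1 / Cr) * D"
    by (rule key_eig[OF K False symm_H2 symm_scov cmp _ lm]) (use Cpos in simp)
  moreover have "D / Cr\<^sup>2 \<le> (1 / Cr) * D"
    using Cr D by (simp add: power2_eq_square field_simps)
  ultimately show ?thesis by linarith
qed


theorem proposition7: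
  fixes m b np nq :: nat
    and \<psi> :: "real \<Rightarrow> real \<Rightarrow> nat \<Rightarrow> real"
    and P Q :: "(nat \<Rightarrow> real) measure"
    and p q :: "(nat \<Rightarrow> real) \<Rightarrow> real"
    and \<theta>s :: "(nat \<times> nat) \<times> nat \<Rightarrow> real"
    and M :: "'w measure"
    and Xp Xq :: "nat \<Rightarrow> 'w \<Rightarrow> nat \<Rightarrow> real"
    and Cmin Cmax Cratio Dmax1 Dmax2 Dmin2 \<delta>nq :: real
    and Cf :: "nat \<times> nat \<Rightarrow> real"
  defines "S \<equiv> supp_blocks m b \<theta>s"
  assumes M: "prob_space M"
    and np: "np \<ge> 1" and nq: "nq \<ge> 1"
    and P: "P = density (Lm m) p" "p \<in> borel_measurable (Lm m)" "\<forall>x\<in>space (Lm m). p x \<ge> 0"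
       "prob_space P"
    and Q: "Q = density (Lm m) q" "q \<in> borel_measurable (Lm m)" "\<forall>x\<in>space (Lm m). q x \<ge> 0"
       "prob_space Q"
    and Xp: "\<forall>l<np. Xp l \<in> measurable M (Rm m) \<and> distr M (Rm m) (Xp l) = P"
       "prob_space.indep_vars M (\<lambda>_. Rm m) Xp {..<np}"
    and Xq: "\<forall>l<nq. Xq l \<in> measurable M (Rm m) \<and> distr M (Rm m) (Xq l) = Q"
       "prob_space.indep_vars M (\<lambda>_. Rm m) Xq {..<nq}"
    and true_param: "\<forall>x\<in>space (Lm m). p x = q x * rfun m b \<psi> Q x \<theta>s"
    and A7_r: "\<forall>\<delta>. vnorm (Idx m b) \<delta> \<le> vnorm (Idx m b) \<theta>s \<longrightarrow>
        (\<forall>x\<in>space (Lm m). Cmin \<le> rfun m b \<psi> Q x (\<lambda>i. \<theta>s i + \<delta> i)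
                           \<and> rfun m b \<psi> Q x (\<lambda>i. \<theta>s i + \<delta> i) \<le> Cmax)"
    and A7_C: "0 < Cmin" "Cmin \<le> Cmax"
    and A7_rhat: "\<forall>\<delta>. vnorm (Idx m b) \<delta> \<le> vnorm (Idx m b) \<theta>s \<longrightarrow>
        (\<forall>\<omega>\<in>space M. \<forall>x\<in>space (Lm m).
            1 / Cratio \<le> rhat m b \<psi> nq (\<lambda>l. Xq l \<omega>) x (\<lambda>i. \<theta>s i + \<delta> i)
          \<and> rhat m b \<psi> nq (\<lambda>l. Xq l \<omega>) x (\<lambda>i. \<theta>s i + \<delta> i) \<le> Cratio)"
    and A7_f: "\<forall>t\<in>E m. \<forall>x\<in>space (Lm m). block_norm b (feat \<psi> x) t \<le> Cf t"
    and A8_as: "AE \<omega> in M.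
        (\<forall>t\<in>E m. (\<Sum>l<nq. block_norm b (feat \<psi> (Xq l \<omega>)) t) / real nq \<le> Dmax1)
      \<and> mat_norm (Idx m b) (ssecond nq (\<lambda>l. feat \<psi> (Xq l \<omega>))) \<le> Dmax2
      \<and> mat_norm (Idx m b) (scov nq (\<lambda>l. feat \<psi> (Xq l \<omega>))) \<le> Dmax2"
    and A8_min: "Dmin2 > 0"
      "\<exists>A\<in>sets M. measure M A \<ge> 1 - \<delta>nq \<and>
         (\<forall>\<omega>\<in>A. lambda_min (IdxS S b) (scov nq (\<lambda>l. feat \<psi> (Xq l \<omega>))) \<ge> Dmin2)"
  shows "\<forall>\<delta>. vnorm (Idx m b) \<delta> \<le> vnorm (Idx m b) \<theta>s \<longrightarrow>
      (\<exists>A\<in>sets M. measure M A \<ge> 1 - \<delta>nq \<and>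
         (\<forall>\<omega>\<in>A. lambda_min (IdxS S b)
             (hessian (loss m b \<psi> np (\<lambda>l. Xp l \<omega>) nq (\<lambda>l. Xq l \<omega>)) (\<lambda>i. \<theta>s i + \<delta> i))
           \<ge> Dmin2 / Cratio\<^sup>2))"
  proof (intro allI impI)
  fix \<delta> :: "(nat \<times> nat) \<times> nat \<Rightarrow> real"
  assume \<delta>: "vnorm (Idx m b) \<delta> \<le> vnorm (Idx m b) \<theta>s"
  define \<theta> where "\<theta> = (\<lambda>i. \<theta>s i + \<delta> i)"
  define J where "J = Idx m b"
  define K where "K = IdxS S b"
  have J: "finite J" unfolding J_def Idx_def using finite_E by simp
  have KJ: "K \<subseteq> J" unfolding K_def J_def IdxS_def Idx_def S_def supp_blocks_def by auto
  obtain A where A: "A \<in> sets M" "measure M A \<ge> 1 - \<delta>nq"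
    "\<forall>\<omega>\<in>A. lambda_min (IdxS S b) (scov nq (\<lambda>l. feat \<psi> (Xq l \<omega>))) \<ge> Dmin2"
    using A8_min(2) by blast
  have sp: "space (Lm m) = space (Rm m)" by (simp add: Lm_def Rm_def space_PiM)
  show "\<exists>A\<in>sets M. measure M A \<ge> 1 - \<delta>nq \<and>
         (\<forall>\<omega>\<in>A. lambda_min (IdxS S b)
             (hessian (loss m b \<psi> np (\<lambda>l. Xp l \<omega>) nq (\<lambda>l. Xq l \<omega>)) (\<lambda>i. \<theta>s i + \<delta> i))
           \<ge> Dmin2 / Cratio\<^sup>2)"
  proof (intro bexI[OF _ A(1)] conjI A(2) ballI)
    fix \<omega> assume \<omega>A: "\<omega> \<in> A"
    have \<omega>: "\<omega> \<in> space M" using \<omega>A A(1) sets.sets_into_space by blast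
    define F where "F l = feat \<psi> (Xq l \<omega>)" for l
    define Fp where "Fp l = feat \<psi> (Xp l \<omega>)" for l
    have xs: "Xq l \<omega> \<in> space (Lm m)" if "l < nq" for l
      using Xq(1) that \<omega> sp by (auto intro: measurable_space)
    have rh_all: "1 / Cratio \<le> rhat m b \<psi> nq (\<lambda>l. Xq l \<omega>) x \<theta> \<and> rhat m b \<psi> nq (\<lambda>l. Xq l \<omega>) x \<theta> \<le> Cratio"
      if "x \<in> space (Lm m)" for x
      using A7_rhat \<delta> \<omega> that unfolding \<theta>_def by blast
    have rhat_eq: "rhat m b \<psi> nq (\<lambda>l. Xq l \<omega>) x \<theta> = exp (ip J \<theta> (feat \<psi> x)) / (EE J nq F \<theta> / real nq)" for x
      unfolding rhat_def Nhat_def EE_def F_def J_def by simp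
    have Epos: "EE J nq F \<theta> > 0" by (rule EE_pos[OF nq])
    have Cr: "Cratio \<ge> 1"
    proof -
      have x0: "Xq 0 \<omega> \<in> space (Lm m)" using xs nq by simp
      have pos: "rhat m b \<psi> nq (\<lambda>l. Xq l \<omega>) (Xq 0 \<omega>) \<theta> > 0"
        unfolding rhat_eq using Epos nq by simp
      have "1 / Cratio \<le> Cratio" "Cratio > 0" using rh_all[OF x0] pos by linarith+
      then show ?thesis
        by (smt (verit, ccfv_SIG) le_divide_eq_1_pos mult_le_cancel_right1 divide_le_eq)
    qed
    have rh: "\<forall>l<nq. exp (ip J \<theta> (F l)) / (EE J nq F \<theta> / real nq) \<ge> 1 / Cratio"
      using rh_all xs unfolding rhat_eq F_def by auto
    have lm: "lambda_min K (scov nq F) \<ge> Dmin2" using A(3) \<omega>A unfolding K_def F_def by blast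
    have loss_eq: "loss m b \<psi> np (\<lambda>l. Xp l \<omega>) nq (\<lambda>l. Xq l \<omega>) = Lg J np Fp nq F"
      by (rule ext) (simp add: loss_def Lg_def Nhat_def EE_def J_def F_def Fp_def)
    have g: "pderiv_at j (Lg J np Fp nq F) = G1 J np Fp nq F j" for j
      by (rule ext) (rule grad[OF J nq np])
    have hess_eq: "hessian (loss m b \<psi> np (\<lambda>l. Xp l \<omega>) nq (\<lambda>l. Xq l \<omega>)) \<theta> = (\<lambda>i j. H2 J nq F i j \<theta>)"
      unfolding loss_eq hessian_def g by (intro ext hess[OF J nq])
    have "lambda_min K (\<lambda>i j. H2 J nq F i j \<theta>) \<ge> Dmin2 / Cratio\<^sup>2"
      by (rule main_det[OF J KJ nq Cr A8_min(1) rh lm])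
    then show "lambda_min (IdxS S b)
             (hessian (loss m b \<psi> np (\<lambda>l. Xp l \<omega>) nq (\<lambda>l. Xq l \<omega>)) (\<lambda>i. \<theta>s i + \<delta> i))
           \<ge> Dmin2 / Cratio\<^sup>2"
      using hess_eq unfolding \<theta>_def K_def by simp
  qed
qed

end
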